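(* Let $H=\sum_ic_iP_i$ be a Pauli Hamiltonian, $|\psi\rangle$ a state, $\mathcal{G}=(G^{[1]},\dots,G^{[m]})$ an overlapped grouping of $H$ and $M_1,\dots,M_m$ positive shot counts. Assume (1) the shot batches of different groups are independent, and (2) for every group $G^{[j]}$ and all distinct $P_i,P_k\in G^{[j]}$, $\mathrm{Cov}(\overline{\langle P_i\rangle}_{(j)},\overline{\langle P_k\rangle}_{(j)})=0$. Then among all unbiased energy estimators $\overline{E}_{\mathcal{G}}(w)=\sum_ic_i\sum_{j\in\Gamma(i)}w_{i,j}\overline{\langle P_i\rangle}_{(j)}$ with $\sum_{j\in\Gamma(i)}w_{i,j}=1$ for every $i$, the minimum variance is attained by the weights $w_{i,j}=M_j/\sum_{k\in\Gamma(i)}M_k$.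
   Context: A Pauli Hamiltonian is $H=\sum_{i=1}^Nc_iP_i$ with real nonzero $c_i$ and distinct $n$-qubit Pauli strings. An overlapped grouping is a list of sets of mutually commuting operators from $\{P_1,\dots,P_N\}$ whose union is $\{P_1,\dots,P_N\}$ (not necessarily disjoint). Group $G^{[j]}$ is measured in $M_j$ independent shots, each shot giving simultaneous $\pm1$ outcomes of all its operators with the Born-rule distribution for $|\psi\rangle$; $\overline{\langle P_i\rangle}_{(j)}$ is the sample mean of the outcomes of $P_i$ over those $M_j$ shots (variance $(1-\langle P_i\rangle^2)/M_j$). $\Gamma(i)=\{j:P_i\in G^{[j]}\}$. *)

theory Defs
  imports "HOL-Probability.Probability"
begin

datatype pauli = PI | PX | PY | PZ

type_synonym pauli_string = "pauli list"

text \<open>Two n-qubit Pauli strings commute iff they anticommute on an even number of sites.\<close>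
definition pstr_commute :: "pauli_string \<Rightarrow> pauli_string \<Rightarrow> bool" where
  "pstr_commute p q \<longleftrightarrow>
     even (card {k. k < length p \<and> p ! k \<noteq> PI \<and> q ! k \<noteq> PI \<and> p ! k \<noteq> q ! k})"

definition pauli_hamiltonian :: "nat \<Rightarrow> nat \<Rightarrow> (nat \<Rightarrow> real) \<Rightarrow> (nat \<Rightarrow> pauli_string) \<Rightarrow> bool" where
  "pauli_hamiltonian n N c P \<longleftrightarrow>
     (\<forall>i<N. length (P i) = n \<and> c i \<noteq> 0) \<and> inj_on P {..<N}"

definition overlapped_grouping :: "nat \<Rightarrow> (nat \<Rightarrow> pauli_string) \<Rightarrow> nat \<Rightarrow> (nat \<Rightarrow> nat set) \<Rightarrow> bool" where
  "overlapped_grouping N P m G \<longleftrightarrow>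
     (\<forall>j<m. G j \<subseteq> {..<N} \<and> (\<forall>i\<in>G j. \<forall>k\<in>G j. pstr_commute (P i) (P k)))
     \<and> (\<Union>j<m. G j) = {..<N}"

definition Gamma :: "nat \<Rightarrow> (nat \<Rightarrow> nat set) \<Rightarrow> nat \<Rightarrow> nat set" where
  "Gamma m G i = {j. j < m \<and> i \<in> G j}"

definition (in prob_space) covariance :: "('a \<Rightarrow> real) \<Rightarrow> ('a \<Rightarrow> real) \<Rightarrow> real" where
  "covariance X Y = expectation (\<lambda>x. (X x - expectation X) * (Y x - expectation Y))"

definition energy_estimator ::
  "nat \<Rightarrow> nat \<Rightarrow> (nat \<Rightarrow> nat set) \<Rightarrow> (nat \<Rightarrow> real) \<Rightarrow> (nat \<Rightarrow> nat \<Rightarrow> 'a \<Rightarrow> real)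
    \<Rightarrow> (nat \<Rightarrow> nat \<Rightarrow> real) \<Rightarrow> 'a \<Rightarrow> real" where
  "energy_estimator N m G c Xbar w \<omega> =
     (\<Sum>i<N. c i * (\<Sum>j\<in>Gamma m G i. w i j * Xbar i j \<omega>))"

definition admissible_weights :: "nat \<Rightarrow> nat \<Rightarrow> (nat \<Rightarrow> nat set) \<Rightarrow> (nat \<Rightarrow> nat \<Rightarrow> real) \<Rightarrow> bool" where
  "admissible_weights N m G w \<longleftrightarrow> (\<forall>i<N. (\<Sum>j\<in>Gamma m G i. w i j) = 1)"

definition optimal_weights :: "nat \<Rightarrow> (nat \<Rightarrow> nat set) \<Rightarrow> (nat \<Rightarrow> nat) \<Rightarrow> nat \<Rightarrow> nat \<Rightarrow> real" where
  "optimal_weights m G Ms i j = real (Ms j) / (\<Sum>k\<in>Gamma m G i. real (Ms k))"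

end

theory Submission
  imports Defs
begin
lemma (in prob_space) sq_int_prod:
  fixes X Y :: "'a \<Rightarrow> real"
  assumes [measurable]: "X \<in> borel_measurable M" "Y \<in> borel_measurable M"
    and "integrable M (\<lambda>x. (X x)\<^sup>2)" "integrable M (\<lambda>x. (Y x)\<^sup>2)"
  shows "integrable M (\<lambda>x. X x * Y x)"
proof (rule Bochner_Integration.integrable_bound[where f="\<lambda>x. (X x)\<^sup>2 + (Y x)\<^sup>2"])
  show "integrable M (\<lambda>x. (X x)\<^sup>2 + (Y x)\<^sup>2)" using assms by auto
  show "(\<lambda>x. X x * Y x) \<in> borel_measurable M" by measurable
  show "AE x in M. norm (X x * Y x) \<le> norm ((X x)\<^sup>2 + (Y x)\<^sup>2)"
  proof (rule AE_I2)
    fix x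
    have b: "2 * \<bar>X x\<bar> * \<bar>Y x\<bar> \<le> \<bar>X x\<bar>\<^sup>2 + \<bar>Y x\<bar>\<^sup>2"
      by (rule sum_squares_bound)
    have h: "\<bar>X x\<bar>\<^sup>2 = (X x)\<^sup>2" "\<bar>Y x\<bar>\<^sup>2 = (Y x)\<^sup>2" by simp_all
    have p: "0 \<le> \<bar>X x\<bar> * \<bar>Y x\<bar>" by simp
    have "\<bar>X x * Y x\<bar> \<le> (X x)\<^sup>2 + (Y x)\<^sup>2"
      unfolding abs_mult using b h p by linarith
    then show "norm (X x * Y x) \<le> norm ((X x)\<^sup>2 + (Y x)\<^sup>2)" by simp
  qed
qed

lemma (in prob_space) sq_int_center:
  fixes X :: "'a \<Rightarrow> real"
  assumes [measurable]: "X \<in> borel_measurable M"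
    and "integrable M (\<lambda>x. (X x)\<^sup>2)"
  shows "integrable M (\<lambda>x. (X x - e)\<^sup>2)"
proof -
  have "integrable M X" using assms square_integrable_imp_integrable by blast
  then have "integrable M (\<lambda>x. (X x)\<^sup>2 - 2 * e * X x + e\<^sup>2)" using assms by auto
  moreover have "(\<lambda>x. (X x)\<^sup>2 - 2 * e * X x + e\<^sup>2) = (\<lambda>x. (X x - e)\<^sup>2)"
    by (auto simp: power2_eq_square algebra_simps)
  ultimately show ?thesis by simp
qed

lemma (in prob_space) var_sum_uncorr:
  fixes S :: "'i set" and Y :: "'i \<Rightarrow> 'a \<Rightarrow> real" and a :: "'i \<Rightarrow> real"
  assumes fin: "finite S"
    and meas: "\<And>s. s \<in> S \<Longrightarrow> Y s \<in> borel_measurable M"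
    and sq: "\<And>s. s \<in> S \<Longrightarrow> integrable M (\<lambda>x. (Y s x)\<^sup>2)"
    and unc: "\<And>s t. s \<in> S \<Longrightarrow> t \<in> S \<Longrightarrow> s \<noteq> t \<Longrightarrow> covariance (Y s) (Y t) = 0"
  shows "variance (\<lambda>x. \<Sum>s\<in>S. a s * Y s x) = (\<Sum>s\<in>S. (a s)\<^sup>2 * variance (Y s))"
proof -
  define Z where "Z s x = Y s x - expectation (Y s)" for s x
  have intY: "integrable M (Y s)" if "s \<in> S" for s
    using meas[OF that] sq[OF that] square_integrable_imp_integrable by blast
  have zm: "Z s \<in> borel_measurable M" if "s \<in> S" for s
    unfolding Z_def using meas[OF that] by measurable
  have zsq: "integrable M (\<lambda>x. (Z s x)\<^sup>2)" if "s \<in> S" for s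
    unfolding Z_def using sq_int_center meas[OF that] sq[OF that] by blast
  have zz: "integrable M (\<lambda>x. Z s x * Z t x)" if "s \<in> S" "t \<in> S" for s t
    using sq_int_prod zm zsq that by blast
  have E: "expectation (\<lambda>x. \<Sum>s\<in>S. a s * Y s x) = (\<Sum>s\<in>S. a s * expectation (Y s))"
    using intY by (simp add: Bochner_Integration.integral_sum)
  have "(\<lambda>x. ((\<Sum>s\<in>S. a s * Y s x) - expectation (\<lambda>x. \<Sum>s\<in>S. a s * Y s x))\<^sup>2)
      = (\<lambda>x. \<Sum>s\<in>S. \<Sum>t\<in>S. a s * a t * (Z s x * Z t x))"
  proof
    fix x
    have "(\<Sum>s\<in>S. a s * Y s x) - expectation (\<lambda>x. \<Sum>s\<in>S. a s * Y s x) = (\<Sum>s\<in>S. a s * Z s x)"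
      unfolding E Z_def by (simp add: sum_subtractf algebra_simps)
    then show "((\<Sum>s\<in>S. a s * Y s x) - expectation (\<lambda>x. \<Sum>s\<in>S. a s * Y s x))\<^sup>2
      = (\<Sum>s\<in>S. \<Sum>t\<in>S. a s * a t * (Z s x * Z t x))"
      by (simp add: power2_eq_square sum_product algebra_simps)
  qed
  then have "variance (\<lambda>x. \<Sum>s\<in>S. a s * Y s x)
      = expectation (\<lambda>x. \<Sum>s\<in>S. \<Sum>t\<in>S. a s * a t * (Z s x * Z t x))" by simp
  also have "\<dots> = (\<Sum>s\<in>S. \<Sum>t\<in>S. a s * a t * expectation (\<lambda>x. Z s x * Z t x))"
    using zz by (simp add: Bochner_Integration.integral_sum)
  also have "\<dots> = (\<Sum>s\<in>S. \<Sum>t\<in>S. if t = s then (a s)\<^sup>2 * variance (Y s) else 0)"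
  proof (intro sum.cong refl)
    fix s t assume st: "s \<in> S" "t \<in> S"
    show "a s * a t * expectation (\<lambda>x. Z s x * Z t x) = (if t = s then (a s)\<^sup>2 * variance (Y s) else 0)"
    proof (cases "t = s")
      case True then show ?thesis by (simp add: Z_def power2_eq_square)
    next
      case False
      then have "covariance (Y s) (Y t) = 0" using unc st by auto
      then show ?thesis using False by (simp add: covariance_def Z_def)
    qed
  qed
  also have "\<dots> = (\<Sum>s\<in>S. (a s)\<^sup>2 * variance (Y s))"
    using fin by simp
  finally show ?thesis .
qed

lemma proj2_meas:
  fixes e :: real
  assumes "j \<in> J" "i \<in> G j"
  shows "(\<lambda>f. f j i - e) \<in> borel_measurable (PiM J (\<lambda>j. PiM (G j) (\<lambda>i. borel)))"
proof -
  have h1: "(\<lambda>f. f j) \<in> measurable (PiM J (\<lambda>j. PiM (G j) (\<lambda>i. borel :: real measure))) (PiM (G j) (\<lambda>i. borel))"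
    using assms(1) by (rule measurable_component_singleton)
  have h2: "(\<lambda>g. g i) \<in> measurable (PiM (G j) (\<lambda>i. borel)) (borel :: real measure)"
    using assms(2) by (rule measurable_component_singleton)
  have "(\<lambda>f. f j i) \<in> borel_measurable (PiM J (\<lambda>j. PiM (G j) (\<lambda>i. borel :: real measure)))"
    using measurable_compose[OF h1 h2] by simp
  then show ?thesis by (rule borel_measurable_diff) simp
qed

lemma weight_ineq:
  fixes w Mr :: "nat \<Rightarrow> real"
  assumes fin: "finite J" and pos: "\<And>j. j \<in> J \<Longrightarrow> Mr j > 0"
    and w1: "(\<Sum>j\<in>J. w j) = 1" and S: "S = (\<Sum>j\<in>J. Mr j)" and Spos: "S > 0"
  shows "(\<Sum>j\<in>J. (Mr j / S)\<^sup>2 / Mr j) \<le> (\<Sum>j\<in>J. (w j)\<^sup>2 / Mr j)"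
proof -
  have a: "(\<Sum>j\<in>J. (Mr j / S)\<^sup>2 / Mr j) = (\<Sum>j\<in>J. Mr j / S\<^sup>2)"
    using pos by (intro sum.cong) (auto simp: power2_eq_square)
  also have "\<dots> = 1 / S" using S Spos by (simp add: sum_divide_distrib[symmetric] power2_eq_square)
  finally have A: "(\<Sum>j\<in>J. (Mr j / S)\<^sup>2 / Mr j) = 1 / S" .
  have "(\<Sum>j\<in>J. (w j - Mr j / S)\<^sup>2 / Mr j) = (\<Sum>j\<in>J. (w j)\<^sup>2 / Mr j - 2 * w j / S + Mr j / S\<^sup>2)"
  proof (intro sum.cong refl)
    fix j assume "j \<in> J"
    then have "Mr j > 0" using pos by auto
    then show "(w j - Mr j / S)\<^sup>2 / Mr j = (w j)\<^sup>2 / Mr j - 2 * w j / S + Mr j / S\<^sup>2"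
      using Spos by (simp add: power2_eq_square divide_simps) (simp add: algebra_simps)
  qed
  also have "\<dots> = (\<Sum>j\<in>J. (w j)\<^sup>2 / Mr j) - 2 * (\<Sum>j\<in>J. w j) / S + (\<Sum>j\<in>J. Mr j) / S\<^sup>2"
    by (simp add: sum.distrib sum_subtractf sum_divide_distrib[symmetric] sum_distrib_left[symmetric])
  also have "\<dots> = (\<Sum>j\<in>J. (w j)\<^sup>2 / Mr j) - 1 / S"
    using w1 S Spos by (simp add: power2_eq_square)
  finally have B: "(\<Sum>j\<in>J. (w j - Mr j / S)\<^sup>2 / Mr j) = (\<Sum>j\<in>J. (w j)\<^sup>2 / Mr j) - 1 / S" .
  have "0 \<le> (\<Sum>j\<in>J. (w j - Mr j / S)\<^sup>2 / Mr j)"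
    using pos by (intro sum_nonneg) (auto intro: divide_nonneg_pos)
  then show ?thesis using A B by simp
qed

theorem lemma1:
  fixes \<Omega> :: "'a measure"
    and n N m :: nat
    and c :: "nat \<Rightarrow> real"
    and P :: "nat \<Rightarrow> pauli_string"
    and G :: "nat \<Rightarrow> nat set"
    and Ms :: "nat \<Rightarrow> nat"
    and ev :: "nat \<Rightarrow> real"
    and Xbar :: "nat \<Rightarrow> nat \<Rightarrow> 'a \<Rightarrow> real"
  assumes "prob_space \<Omega>"
    and "pauli_hamiltonian n N c P"
    and "overlapped_grouping N P m G"
    and "\<forall>j<m. Ms j > 0"
    and "\<forall>i<N. \<bar>ev i\<bar> \<le> 1"
    and "\<forall>j<m. \<forall>i\<in>G j. Xbar i j \<in> borel_measurable \<Omega>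
            \<and> integrable \<Omega> (\<lambda>\<omega>. (Xbar i j \<omega>)\<^sup>2)
            \<and> prob_space.expectation \<Omega> (Xbar i j) = ev i
            \<and> prob_space.variance \<Omega> (Xbar i j) = (1 - (ev i)\<^sup>2) / real (Ms j)"
    and indep: "prob_space.indep_vars \<Omega> (\<lambda>j. \<Pi>\<^sub>M i\<in>G j. borel)
                  (\<lambda>j \<omega>. \<lambda>i\<in>G j. Xbar i j \<omega>) {..<m}"
    and uncorr: "\<forall>j<m. \<forall>i\<in>G j. \<forall>k\<in>G j. i \<noteq> k \<longrightarrow>
                  prob_space.covariance \<Omega> (Xbar i j) (Xbar k j) = 0"
  shows "admissible_weights N m G (optimal_weights m G Ms)
    \<and> (\<forall>w. admissible_weights N m G w \<longrightarrow>
          prob_space.variance \<Omega> (energy_estimator N m G c Xbar (optimal_weights m G Ms))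
            \<le> prob_space.variance \<Omega> (energy_estimator N m G c Xbar w))"
proof -
  interpret prob_space \<Omega> by fact
  note X = assms(6)
  have XM: "Xbar i j \<in> borel_measurable \<Omega>" if "j < m" "i \<in> G j" for i j
    using X that by blast
  have XS: "integrable \<Omega> (\<lambda>\<omega>. (Xbar i j \<omega>)\<^sup>2)" if "j < m" "i \<in> G j" for i j
    using X that by blast
  have XE: "expectation (Xbar i j) = ev i" if "j < m" "i \<in> G j" for i j
    using X that by blast
  have XV: "variance (Xbar i j) = (1 - (ev i)\<^sup>2) / real (Ms j)" if "j < m" "i \<in> G j" for i j
    using X that by blast
  have Gsub: "\<And>j. j < m \<Longrightarrow> G j \<subseteq> {..<N}" and Gun: "(\<Union>j<m. G j) = {..<N}"
    using assms(3) unfolding overlapped_grouping_def by auto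
  have finG: "finite (Gamma m G i)" for i unfolding Gamma_def by auto
  have Gmem: "j \<in> Gamma m G i \<longleftrightarrow> j < m \<and> i \<in> G j" for i j unfolding Gamma_def by auto
  define Sm where "Sm i = (\<Sum>k\<in>Gamma m G i. real (Ms k))" for i
  have Spos: "Sm i > 0" if "i < N" for i
  proof -
    have "i \<in> (\<Union>j<m. G j)" using Gun that by simp
    then obtain j where j: "j < m" "i \<in> G j" by auto
    then have jg: "j \<in> Gamma m G i" using Gmem by auto
    have "real (Ms j) \<le> Sm i" unfolding Sm_def
      using finG jg by (intro member_le_sum) auto
    moreover have "real (Ms j) > 0" using assms(4) j by auto
    ultimately show ?thesis by linarith
  qed
  have adm: "admissible_weights N m G (optimal_weights m G Ms)"
    unfolding admissible_weights_def optimal_weights_def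
  proof (intro allI impI)
    fix i assume "i < N"
    then have "Sm i > 0" by (rule Spos)
    then show "(\<Sum>j\<in>Gamma m G i. real (Ms j) / (\<Sum>k\<in>Gamma m G i. real (Ms k))) = 1"
      unfolding Sm_def by (simp add: sum_divide_distrib[symmetric])
  qed
  define Sig where "Sig = Sigma {..<N} (Gamma m G)"
  have finSig: "finite Sig" unfolding Sig_def using finG by auto
  have inSig: "p \<in> Sig \<Longrightarrow> snd p < m \<and> fst p \<in> G (snd p) \<and> fst p < N" for p
    unfolding Sig_def using Gmem by auto
  define Y where "Y p = Xbar (fst p) (snd p)" for p
  have Ym: "Y p \<in> borel_measurable \<Omega>" and Ysq: "integrable \<Omega> (\<lambda>x. (Y p x)\<^sup>2)"
    and YE: "expectation (Y p) = ev (fst p)"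
    and YV: "variance (Y p) = (1 - (ev (fst p))\<^sup>2) / real (Ms (snd p))"
    if "p \<in> Sig" for p
  proof -
    have a: "snd p < m" "fst p \<in> G (snd p)" using inSig[OF that] by auto
    show "Y p \<in> borel_measurable \<Omega>" "integrable \<Omega> (\<lambda>x. (Y p x)\<^sup>2)"
      "expectation (Y p) = ev (fst p)" "variance (Y p) = (1 - (ev (fst p))\<^sup>2) / real (Ms (snd p))"
      unfolding Y_def using XM[OF a] XS[OF a] XE[OF a] XV[OF a] by simp_all
  qed
  have unc: "covariance (Y p) (Y q) = 0" if pq: "p \<in> Sig" "q \<in> Sig" "p \<noteq> q" for p q
  proof (cases "snd p = snd q")
    case True
    then have "fst p \<noteq> fst q" using pq by (simp add: prod_eq_iff)
    then show ?thesis using uncorr inSig[OF pq(1)] inSig[OF pq(2)] True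
      unfolding Y_def by auto
  next
    case False
    define j where "j = snd p"
    define l where "l = snd q"
    define i where "i = fst p"
    define k where "k = fst q"
    have jl: "j < m" "l < m" "i \<in> G j" "k \<in> G l" "j \<noteq> l"
      using inSig[OF pq(1)] inSig[OF pq(2)] False unfolding i_def j_def k_def l_def by auto
    have iv: "indep_var (Pi\<^sub>M {j} (\<lambda>j. \<Pi>\<^sub>M i\<in>G j. borel)) (\<lambda>\<omega>. restrict (\<lambda>j'. \<lambda>i\<in>G j'. Xbar i j' \<omega>) {j})
       (Pi\<^sub>M {l} (\<lambda>j. \<Pi>\<^sub>M i\<in>G j. borel)) (\<lambda>\<omega>. restrict (\<lambda>j'. \<lambda>i\<in>G j'. Xbar i j' \<omega>) {l})"
      using jl by (intro indep_var_restrict[OF indep]) auto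
    define Z1 where "Z1 x = Xbar i j x - ev i" for x
    define Z2 where "Z2 x = Xbar k l x - ev k" for x
    have Z1e: "Z1 = (\<lambda>x. Xbar i j x - ev i)" by (simp add: fun_eq_iff Z1_def)
    have Z2e: "Z2 = (\<lambda>x. Xbar k l x - ev k)" by (simp add: fun_eq_iff Z2_def)
    have "indep_var borel ((\<lambda>f. f j i - ev i) \<circ> (\<lambda>\<omega>. restrict (\<lambda>j'. \<lambda>i\<in>G j'. Xbar i j' \<omega>) {j}))
                   borel ((\<lambda>f. f l k - ev k) \<circ> (\<lambda>\<omega>. restrict (\<lambda>j'. \<lambda>i\<in>G j'. Xbar i j' \<omega>) {l}))"
      by (rule indep_var_compose[OF iv]) (use jl in \<open>auto intro!: proj2_meas\<close>)
    also have "((\<lambda>f. f j i - ev i) \<circ> (\<lambda>\<omega>. restrict (\<lambda>j'. \<lambda>i\<in>G j'. Xbar i j' \<omega>) {j})) = Z1"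
      using jl by (auto simp: Z1_def fun_eq_iff)
    also have "((\<lambda>f. f l k - ev k) \<circ> (\<lambda>\<omega>. restrict (\<lambda>j'. \<lambda>i\<in>G j'. Xbar i j' \<omega>) {l})) = Z2"
      using jl by (auto simp: Z2_def fun_eq_iff)
    finally have ind2: "indep_var borel Z1 borel Z2" .
    have i1: "integrable \<Omega> (Xbar i j)" by (rule square_integrable_imp_integrable[OF XM[OF jl(1,3)] XS[OF jl(1,3)]])
    have i2: "integrable \<Omega> (Xbar k l)" by (rule square_integrable_imp_integrable[OF XM[OF jl(2,4)] XS[OF jl(2,4)]])
    have e1: "expectation (Xbar i j) = ev i" by (rule XE[OF jl(1,3)])
    have e2: "expectation (Xbar k l) = ev k" by (rule XE[OF jl(2,4)])
    have "expectation (\<lambda>x. Z1 x * Z2 x) = expectation Z1 * expectation Z2"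
      by (rule indep_var_lebesgue_integral[OF ind2]) (use i1 i2 in \<open>auto simp: Z1e Z2e\<close>)
    also have "expectation Z1 = 0" using i1 e1 by (simp add: Z1e prob_space)
    finally have "expectation (\<lambda>x. Z1 x * Z2 x) = 0" by simp
    then show ?thesis unfolding covariance_def Y_def Z1_def Z2_def e1 e2
      using e1 e2 by (simp add: i_def j_def k_def l_def)
  qed
  have var_eq: "variance (energy_estimator N m G c Xbar w) =
      (\<Sum>i<N. (c i)\<^sup>2 * (1 - (ev i)\<^sup>2) * (\<Sum>j\<in>Gamma m G i. (w i j)\<^sup>2 / real (Ms j)))" for w
  proof -
    have "energy_estimator N m G c Xbar w = (\<lambda>x. \<Sum>p\<in>Sig. (c (fst p) * w (fst p) (snd p)) * Y p x)"
    proof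
      fix x
      have "energy_estimator N m G c Xbar w x = (\<Sum>i<N. \<Sum>j\<in>Gamma m G i. c i * (w i j * Xbar i j x))"
        unfolding energy_estimator_def by (simp add: sum_distrib_left)
      also have "\<dots> = (\<Sum>p\<in>Sig. c (fst p) * (w (fst p) (snd p) * Xbar (fst p) (snd p) x))"
        unfolding Sig_def
        using sum.Sigma[of "{..<N}" "Gamma m G" "\<lambda>i j. c i * (w i j * Xbar i j x)"] finG
        by (simp add: split_beta)
      finally show "energy_estimator N m G c Xbar w x = (\<Sum>p\<in>Sig. (c (fst p) * w (fst p) (snd p)) * Y p x)"
        by (simp add: Y_def mult.assoc)
    qed
    then have "variance (energy_estimator N m G c Xbar w)
       = (\<Sum>p\<in>Sig. (c (fst p) * w (fst p) (snd p))\<^sup>2 * variance (Y p))"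
      using var_sum_uncorr[OF finSig Ym Ysq unc] by simp
    also have "\<dots> = (\<Sum>p\<in>Sig. (c (fst p) * w (fst p) (snd p))\<^sup>2 * ((1 - (ev (fst p))\<^sup>2) / real (Ms (snd p))))"
      using YV by (intro sum.cong) auto
    also have "\<dots> = (\<Sum>i<N. \<Sum>j\<in>Gamma m G i. (c i * w i j)\<^sup>2 * ((1 - (ev i)\<^sup>2) / real (Ms j)))"
      unfolding Sig_def
      using sum.Sigma[of "{..<N}" "Gamma m G" "\<lambda>i j. (c i * w i j)\<^sup>2 * ((1 - (ev i)\<^sup>2) / real (Ms j))"] finG
      by (simp add: split_beta)
    also have "\<dots> = (\<Sum>i<N. (c i)\<^sup>2 * (1 - (ev i)\<^sup>2) * (\<Sum>j\<in>Gamma m G i. (w i j)\<^sup>2 / real (Ms j)))"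
      by (intro sum.cong refl) (simp add: sum_distrib_left power_mult_distrib mult_ac)
    finally show ?thesis .
  qed
  have "variance (energy_estimator N m G c Xbar (optimal_weights m G Ms))
        \<le> variance (energy_estimator N m G c Xbar w)"
    if wa: "admissible_weights N m G w" for w
    unfolding var_eq
  proof (rule sum_mono, rule mult_left_mono)
    fix i assume "i \<in> {..<N}"
    then have iN: "i < N" by auto
    show "0 \<le> (c i)\<^sup>2 * (1 - (ev i)\<^sup>2)"
    proof -
      have "(ev i)\<^sup>2 \<le> 1" using assms(5) iN by (metis abs_le_square_iff abs_one one_power2)
      then show ?thesis by simp
    qed
    show "(\<Sum>j\<in>Gamma m G i. (optimal_weights m G Ms i j)\<^sup>2 / real (Ms j))
        \<le> (\<Sum>j\<in>Gamma m G i. (w i j)\<^sup>2 / real (Ms j))"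
      unfolding optimal_weights_def
      by (rule weight_ineq[OF finG _ _ refl Spos[OF iN, unfolded Sm_def]])
         (use assms(4) Gmem wa iN in \<open>auto simp: admissible_weights_def\<close>)
  qed
  then show ?thesis using adm by blast
qed

end
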